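(* Let $\gamma>0$, $y>0$, $x_1\ge0$, $\sigma\ge0$ be real with $y+4x_1+\sigma/\gamma<1$, and assume (C1) $\sigma/\gamma\le y/(q-1)$; (C2) $2x_1(y+\sigma/\gamma+2x_1)^2<(1-y-\sigma/\gamma-4x_1)^2(y+\sigma/\gamma)$; (C3) $\frac\sigma\gamma(1-y)<y^2$. Then $$I_{y,x_1}(\sigma)=S(\sigma,y,0,2x_1)=E(2x_1)+(1-2x_1)E\Bigl(\frac{y+2x_1}{1-2x_1}\Bigr)+\Bigl(y+\frac\sigma\gamma+2x_1\Bigr)E\Bigl(\frac{y+2x_1}{y+\sigma/\gamma+2x_1}\Bigr).$$
   Context: $E(x)=-x\log_qx-(1-x)\log_q(1-x)$ for $0<x<1$, $E(0)=E(1)=0$. $S(\sigma,y,x,t_1)=E(t_1)+(1-t_1)E\bigl(\frac{y+x+t_1}{1-t_1}\bigr)+Z$, where $Z=(y+\sigma/\gamma+t_1)E\bigl(\frac{y+x+t_1}{y+\sigma/\gamma+t_1}\bigr)$ if $\frac{y+x+t_1}{y+\sigma/\gamma+t_1}\ge1-\frac1q$ and $Z=(y+\sigma/\gamma+t_1)-(y+x+t_1)\log_q(q-1)$ otherwise. $I_{y,x_1}(\sigma)=\max S(\sigma,y,x,t_1)$ over real $0\le t_1\le2x_1$, $0\le x\le\sigma/\gamma$. *)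

theory Defs
  imports "HOL-Analysis.Analysis"
begin

text \<open>q-ary entropy function; q is the alphabet size (natural number, q \<ge> 2).
  Outside the open interval (0,1) it is set to 0 (the paper only defines it on [0,1]).\<close>
definition Hq :: "nat \<Rightarrow> real \<Rightarrow> real" where
  "Hq q x = (if 0 < x \<and> x < 1
             then - x * log (real q) x - (1 - x) * log (real q) (1 - x) else 0)"

definition Zq :: "nat \<Rightarrow> real \<Rightarrow> real \<Rightarrow> real \<Rightarrow> real \<Rightarrow> real \<Rightarrow> real" where
  "Zq q \<gamma> \<sigma> y x t1 =
    (if (y + x + t1) / (y + \<sigma>/\<gamma> + t1) \<ge> 1 - 1 / real q
     then (y + \<sigma>/\<gamma> + t1) * Hq q ((y + x + t1) / (y + \<sigma>/\<gamma> + t1))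
     else (y + \<sigma>/\<gamma> + t1) - (y + x + t1) * log (real q) (real q - 1))"

definition Sfun :: "nat \<Rightarrow> real \<Rightarrow> real \<Rightarrow> real \<Rightarrow> real \<Rightarrow> real \<Rightarrow> real" where
  "Sfun q \<gamma> \<sigma> y x t1 =
     Hq q t1 + (1 - t1) * Hq q ((y + x + t1) / (1 - t1)) + Zq q \<gamma> \<sigma> y x t1"

definition Svals :: "nat \<Rightarrow> real \<Rightarrow> real \<Rightarrow> real \<Rightarrow> real \<Rightarrow> real set" where
  "Svals q \<gamma> \<sigma> y x1 =
     {Sfun q \<gamma> \<sigma> y x t1 | x t1. 0 \<le> t1 \<and> t1 \<le> 2 * x1 \<and> 0 \<le> x \<and> x \<le> \<sigma> / \<gamma>}"

definition Ifun :: "nat \<Rightarrow> real \<Rightarrow> real \<Rightarrow> real \<Rightarrow> real \<Rightarrow> real" where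
  "Ifun q \<gamma> y x1 \<sigma> = Sup (Svals q \<gamma> \<sigma> y x1)"

end

theory Submission
  imports Defs
begin
definition hh :: "real \<Rightarrow> real" where "hh a = a * ln a"
lemma hh_lim: "(hh \<longlongrightarrow> 0) (at_right 0)"
proof -
  have "((\<lambda>x::real. - (ln x / x)) \<longlongrightarrow> 0) at_top"
    using tendsto_minus[OF ln_x_over_x_tendsto_0] by simp
  then have "((\<lambda>x. hh (inverse x)) \<longlongrightarrow> 0) at_top"
    apply (rule Lim_transform_eventually)
    using eventually_gt_at_top[of 0] apply eventually_elim apply (simp add: hh_def ln_inverse divide_inverse) done
  then show ?thesis by (rule filterlim_at_right_to_top[THEN iffD2])
qed
lemma hh_cont: "continuous_on {0..} hh"
proof -
  have "continuous (at x within {0..}) hh" if "x \<ge> 0" for x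
  proof (cases "x = 0")
    case True
    have "(hh \<longlongrightarrow> hh 0) (at 0 within {0..})"
      using hh_lim by (simp add: hh_def at_within_Ici_at_right)
    then show ?thesis using True by (simp add: continuous_within)
  next
    case False
    then have "isCont hh x" using that unfolding hh_def by (intro continuous_intros) auto
    then show ?thesis using continuous_at_imp_continuous_at_within by blast
  qed
  then show ?thesis by (simp add: continuous_on_eq_continuous_within)
qed
lemma hh_chain[derivative_intros]:
  "(f has_real_derivative f') (at x) \<Longrightarrow> f x > 0 \<Longrightarrow>
   ((\<lambda>x. hh (f x)) has_real_derivative (ln (f x) + 1) * f') (at x)"
  unfolding hh_def by (auto intro!: derivative_eq_intros simp: field_simps)

lemma hh_cont_comp:
  assumes "continuous_on S f" "\<And>x. x \<in> S \<Longrightarrow> f x \<ge> 0"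
  shows "continuous_on S (\<lambda>x. hh (f x))"
  by (rule continuous_on_compose2[OF hh_cont assms(1)]) (use assms(2) in auto)

lemma Hq_scaled:
  assumes "q \<ge> 2" "m > 0" "0 \<le> a" "a \<le> m"
  shows "m * Hq q (a/m) = (hh m - hh a - hh (m-a)) / ln q"
proof -
  consider "a = 0" | "a = m" | "0 < a \<and> a < m" using assms by linarith
  then show ?thesis
  proof cases
    case 1 then show ?thesis by (simp add: Hq_def hh_def)
  next
    case 2 then show ?thesis using assms by (simp add: Hq_def hh_def)
  next
    case 3
    then have r: "0 < a/m" "a/m < 1" using assms by (auto simp: field_simps)
    have e: "1 - a/m = (m-a)/m" using assms by (simp add: field_simps)
    have "m * Hq q (a/m) = m * (- (a/m) * (ln (a/m) / ln q) - ((m-a)/m) * (ln ((m-a)/m) / ln q))"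
      using r e by (simp add: Hq_def log_def)
    also have "\<dots> = (- a * (ln a - ln m) - (m-a) * (ln (m-a) - ln m)) / ln q"
      using assms 3 by (simp add: ln_div field_simps)
    also have "\<dots> = (hh m - hh a - hh (m-a)) / ln q"
      by (simp add: hh_def algebra_simps)
    finally show ?thesis .
  qed
qed

lemma ratio_ok:
  assumes "q \<ge> 2" "y > 0" "s \<ge> 0" "0 \<le> x" "0 \<le> t" "s \<le> y / (real q - 1)"
  shows "(y+x+t)/(y+s+t) \<ge> 1 - 1 / real q"
proof -
  have q1: "real q - 1 > 0" using assms by simp
  have "(real q - 1) * s \<le> y" using assms(6) q1 by (simp add: le_divide_eq mult.commute)
  then have "(real q - 1) * (y+s+t) \<le> real q * (y+x+t)"
  proof -
    have xq: "0 \<le> real q * x" using assms by simp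
    have e1: "(real q - 1) * (y+s+t) = (real q - 1) * s + (real q - 1) * (y+t)" by (simp add: algebra_simps)
    have e2: "real q * (y+x+t) = real q * x + (real q - 1) * (y+t) + (y+t)" by (simp add: algebra_simps)
    show ?thesis unfolding e1 e2 using xq \<open>(real q - 1) * s \<le> y\<close> assms by linarith
  qed
  then have "(real q - 1) / real q \<le> (y+x+t)/(y+s+t)"
    using assms by (simp add: divide_simps mult.commute)
  moreover have "(real q - 1) / real q = 1 - 1 / real q" using assms by (simp add: field_simps)
  ultimately show ?thesis by simp
qed

definition FF :: "real \<Rightarrow> real \<Rightarrow> real \<Rightarrow> real \<Rightarrow> real" where
  "FF s y x t = - hh t - 2 * hh (y+x+t) - hh (1-y-x-2*t) + hh (y+s+t) - hh (s-x)"

lemma Sfun_eq: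
  assumes "q \<ge> 2" "\<gamma> > 0" "y > 0" "s = \<sigma>/\<gamma>" "0 \<le> x" "x \<le> s" "0 \<le> t" "y+s+2*t \<le> 1"
    "s \<le> y / (real q - 1)"
  shows "Sfun q \<gamma> \<sigma> y x t = FF s y x t / ln q"
proof -
  have s0: "s \<ge> 0" using assms by linarith
  have h1: "Hq q t = (hh 1 - hh t - hh (1-t)) / ln q"
    using Hq_scaled[of q 1 t] assms by simp
  have h2: "(1-t) * Hq q ((y+x+t)/(1-t)) = (hh (1-t) - hh (y+x+t) - hh (1-y-x-2*t)) / ln q"
    using Hq_scaled[of q "1-t" "y+x+t"] assms by (simp add: algebra_simps)
  have h3: "(y+s+t) * Hq q ((y+x+t)/(y+s+t)) = (hh (y+s+t) - hh (y+x+t) - hh (s-x)) / ln q"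
    using Hq_scaled[of q "y+s+t" "y+x+t"] assms s0 by (simp add: algebra_simps)
  have z: "Zq q \<gamma> \<sigma> y x t = (y+s+t) * Hq q ((y+x+t)/(y+s+t))"
    using ratio_ok[of q y s x t] assms s0 by (simp add: Zq_def)
  show ?thesis unfolding Sfun_def z h1 h2 h3 FF_def
    by (simp add: hh_def add_divide_distrib diff_divide_distrib)
qed

lemma mono_x:
  assumes "y > 0" "s \<ge> 0" "s * (1 - y) < y^2" "0 \<le> t" "y+s+2*t < 1" "0 \<le> x" "x \<le> s"
  shows "FF s y x t \<le> FF s y 0 t"
proof -
  let ?f = "\<lambda>z. FF s y z t"
  have "?f 0 \<ge> ?f x"
  proof (rule DERIV_nonpos_imp_decreasing_open[where f = ?f and a = 0 and b = x])
    show "0 \<le> x" by fact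
    show "continuous_on {0..x} ?f" unfolding FF_def using assms
      by (intro continuous_intros hh_cont_comp) auto
    fix z assume z: "0 < z" "z < x"
    have p: "y+z+t > 0" "1-y-z-2*t > 0" "s - z > 0" using assms z by auto
    have "(?f has_real_derivative (ln (1-y-z-2*t) + ln (s-z) - 2 * ln (y+z+t))) (at z)"
      unfolding FF_def using p
      by (auto intro!: derivative_eq_intros simp: algebra_simps)
    moreover have "ln (1-y-z-2*t) + ln (s-z) - 2 * ln (y+z+t) \<le> 0"
    proof -
      have "(1-y-z-2*t) * (s-z) \<le> (1 - y) * s"
        using p assms z by (intro mult_mono) auto
      also have "\<dots> = s * (1 - y)" by simp
      also have "\<dots> < y^2" by fact
      also have "\<dots> \<le> (y+z+t)^2" using assms z by (intro power_mono) auto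
      finally have "ln ((1-y-z-2*t) * (s-z)) \<le> ln ((y+z+t)^2)"
        using p by (subst ln_le_cancel_iff) auto
      then show ?thesis using p by (simp add: ln_mult ln_realpow)
    qed
    ultimately show "\<exists>d. (?f has_real_derivative d) (at z) \<and> d \<le> 0" by blast
  qed
  then show ?thesis by simp
qed

lemma hh_lin: assumes "c + k*z > 0"
  shows "((\<lambda>z. hh (c + k*z)) has_real_derivative (ln (c+k*z) + 1) * k) (at z)"
proof -
  have "((\<lambda>z. c + k*z) has_real_derivative k) (at z)"
    using DERIV_add[OF DERIV_const DERIV_cmult[OF DERIV_ident, of k]] by simp
  from hh_chain[OF this] assms show ?thesis by simp
qed
lemma A: assumes p: "z > 0" "y+z > 0" "1-y-2*z > 0" "y+s+z > 0"
  shows "((\<lambda>z. - hh z - 2 * hh (y+z) - hh (1-y-2*z) + hh (y+s+z)) has_real_derivative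
      (2 * ln (1-y-2*z) + ln (y+s+z) - ln z - 2 * ln (y+z))) (at z)"
proof -
  have a: "((\<lambda>z. hh (0 + 1*z)) has_real_derivative (ln (0+1*z) + 1) * 1) (at z)" by (rule hh_lin) (use p in simp)
  have b: "((\<lambda>z. hh (y + 1*z)) has_real_derivative (ln (y+1*z) + 1) * 1) (at z)" by (rule hh_lin) (use p in simp)
  have c: "((\<lambda>z. hh ((1-y) + (-2)*z)) has_real_derivative (ln ((1-y)+(-2)*z) + 1) * (-2)) (at z)" by (rule hh_lin) (use p in simp)
  have d: "((\<lambda>z. hh ((y+s) + 1*z)) has_real_derivative (ln ((y+s)+1*z) + 1) * 1) (at z)" by (rule hh_lin) (use p in simp)
  have "((\<lambda>z. - hh (0 + 1*z) - 2 * hh (y + 1*z) - hh ((1-y) + (-2)*z) + hh ((y+s) + 1*z)) has_real_derivative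
     (- ((ln (0+1*z) + 1) * 1) - 2 * ((ln (y+1*z) + 1) * 1) - (ln ((1-y)+(-2)*z) + 1) * (-2) + (ln ((y+s)+1*z) + 1) * 1)) (at z)"
    by (intro DERIV_add DERIV_diff DERIV_minus DERIV_cmult a b c d)
  moreover have eF: "(\<lambda>z. - hh (0 + 1*z) - 2 * hh (y + 1*z) - hh ((1-y) + (-2)*z) + hh ((y+s) + 1*z)) = (\<lambda>z. - hh z - 2 * hh (y+z) - hh (1-y-2*z) + hh (y+s+z))"
    by (simp add: fun_eq_iff algebra_simps)
  moreover have eV: "(- ((ln (0+1*z) + 1) * 1) - 2 * ((ln (y+1*z) + 1) * 1) - (ln ((1-y)+(-2)*z) + 1) * (-2) + (ln ((y+s)+1*z) + 1) * 1) = 2 * ln (1-y-2*z) + ln (y+s+z) - ln z - 2 * ln (y+z)"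
    by (simp add: algebra_simps)
  ultimately show ?thesis by metis
qed


lemma mono_t:
  assumes "y > 0" "s \<ge> 0" "T \<ge> 0" "y+s+2*T < 1"
    "T * (y+s+T)^2 < (1-y-s-2*T)^2 * (y+s)" "0 \<le> t" "t \<le> T"
  shows "FF s y 0 t \<le> FF s y 0 T"
proof (rule DERIV_nonneg_imp_increasing_open[where f = "\<lambda>z. FF s y 0 z"])
  show "t \<le> T" by fact
  show "continuous_on {t..T} (\<lambda>z. FF s y 0 z)"
  proof -
    have e: "(\<lambda>z. FF s y 0 z) = (\<lambda>z. (- hh z - 2 * hh (y+z) - hh (1-y-2*z) + hh (y+s+z)) - hh s)"
      by (simp add: FF_def fun_eq_iff)
    have c1: "continuous_on {t..T} (\<lambda>z. hh z)"
      by (rule continuous_on_subset[OF hh_cont]) (use assms(6) in auto)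
    have c2: "continuous_on {t..T} (\<lambda>z. hh (y+z))"
      apply (rule hh_cont_comp[where f = "\<lambda>z. y+z"])
       apply (intro continuous_intros)
      using assms(1,6) apply auto
      done
    have c3: "continuous_on {t..T} (\<lambda>z. hh (1-y-2*z))"
      apply (rule hh_cont_comp[where f = "\<lambda>z. 1-y-2*z"])
       apply (intro continuous_intros)
      using assms(2,4) apply auto
      done
    have c4: "continuous_on {t..T} (\<lambda>z. hh (y+s+z))"
      apply (rule hh_cont_comp[where f = "\<lambda>z. y+s+z"])
       apply (intro continuous_intros)
      using assms(1,2,6) apply auto
      done
    show ?thesis unfolding e
      by (intro continuous_on_diff continuous_on_add continuous_on_minus continuous_on_mult_left
          continuous_on_const c1 c2 c3 c4)
  qed
  fix z assume z: "t < z" "z < T"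
  have p: "z > 0" "y+z > 0" "1-y-2*z > 0" "y+s+z > 0" using assms(1-4,6,7) z by auto
  have e: "(\<lambda>z. FF s y 0 z) = (\<lambda>z. (- hh z - 2 * hh (y+z) - hh (1-y-2*z) + hh (y+s+z)) - hh s)"
    by (simp add: FF_def fun_eq_iff)
  have dG: "((\<lambda>z. - hh z - 2 * hh (y+z) - hh (1-y-2*z) + hh (y+s+z)) has_real_derivative
      (2 * ln (1-y-2*z) + ln (y+s+z) - ln z - 2 * ln (y+z))) (at z)"
    by (rule A) (use p in auto)
  have "((\<lambda>z. FF s y 0 z) has_real_derivative
      (2 * ln (1-y-2*z) + ln (y+s+z) - ln z - 2 * ln (y+z))) (at z)"
  proof -
    have D0: "((\<lambda>z. (- hh z - 2 * hh (y+z) - hh (1-y-2*z) + hh (y+s+z)) - hh s) has_real_derivative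
      (2 * ln (1-y-2*z) + ln (y+s+z) - ln z - 2 * ln (y+z)) - 0) (at z)"
      by (rule DERIV_diff[OF dG DERIV_const])
    show ?thesis using D0 unfolding e diff_zero .
  qed
  moreover have "2 * ln (1-y-2*z) + ln (y+s+z) - ln z - 2 * ln (y+z) \<ge> 0"
  proof -
    have pa: "(y+z)^2 \<le> (y+s+T)^2" by (rule power_mono) (use p z assms in auto)
    have "z * (y+z)^2 \<le> T * (y+s+T)^2"
      by (rule mult_mono) (use pa p z assms in auto)
    also have "\<dots> < (1-y-s-2*T)^2 * (y+s)" by fact
    also have "\<dots> \<le> (1-y-2*z)^2 * (y+s+z)"
    proof -
      have pb: "(1-y-s-2*T)^2 \<le> (1-y-2*z)^2" by (rule power_mono) (use p z assms in auto)
      show ?thesis by (rule mult_mono) (use pb p z assms in auto)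
    qed
    finally have le: "z * (y+z)^2 \<le> (1-y-2*z)^2 * (y+s+z)" by (rule less_imp_le)
    have pos1: "0 < z * (y+z)^2" using p by simp
    have pos2: "0 < (1-y-2*z)^2 * (y+s+z)" using p by simp
    have "ln (z * (y+z)^2) \<le> ln ((1-y-2*z)^2 * (y+s+z))"
      using le by (subst ln_le_cancel_iff[OF pos1 pos2])
    moreover have "ln (z * (y+z)^2) = ln z + 2 * ln (y+z)"
    proof -
      have "ln (z * (y+z)^2) = ln z + ln ((y+z)^2)" by (rule ln_mult_pos) (use p in auto)
      moreover have "ln ((y+z)^2) = 2 * ln (y+z)" using ln_realpow[of "y+z" 2] p by simp
      ultimately show ?thesis by simp
    qed
    moreover have "ln ((1-y-2*z)^2 * (y+s+z)) = 2 * ln (1-y-2*z) + ln (y+s+z)"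
    proof -
      have "ln ((1-y-2*z)^2 * (y+s+z)) = ln ((1-y-2*z)^2) + ln (y+s+z)" by (rule ln_mult_pos) (use p in auto)
      moreover have "ln ((1-y-2*z)^2) = 2 * ln (1-y-2*z)" using ln_realpow[of "1-y-2*z" 2] p by simp
      ultimately show ?thesis by simp
    qed
    ultimately show ?thesis by linarith
  qed
  ultimately show "\<exists>d. ((\<lambda>z. FF s y 0 z) has_real_derivative d) (at z) \<and> d \<ge> 0"
    by (intro exI conjI)
qed

theorem corollary4p9:
  fixes q :: nat and \<gamma> y x1 \<sigma> :: real
  assumes "q \<ge> 2"
    and "\<gamma> > 0" and "y > 0" and "x1 \<ge> 0" and "\<sigma> \<ge> 0"
    and "y + 4 * x1 + \<sigma> / \<gamma> < 1"
    and C1: "\<sigma> / \<gamma> \<le> y / (real q - 1)"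
    and C2: "2 * x1 * (y + \<sigma>/\<gamma> + 2 * x1)^2 < (1 - y - \<sigma>/\<gamma> - 4 * x1)^2 * (y + \<sigma>/\<gamma>)"
    and C3: "\<sigma> / \<gamma> * (1 - y) < y^2"
  shows "Sfun q \<gamma> \<sigma> y 0 (2 * x1) \<in> Svals q \<gamma> \<sigma> y x1
    \<and> (\<forall>s \<in> Svals q \<gamma> \<sigma> y x1. s \<le> Sfun q \<gamma> \<sigma> y 0 (2 * x1))
    \<and> Ifun q \<gamma> y x1 \<sigma> = Sfun q \<gamma> \<sigma> y 0 (2 * x1)
    \<and> Sfun q \<gamma> \<sigma> y 0 (2 * x1) =
        Hq q (2 * x1) + (1 - 2 * x1) * Hq q ((y + 2 * x1) / (1 - 2 * x1))
        + (y + \<sigma>/\<gamma> + 2 * x1) * Hq q ((y + 2 * x1) / (y + \<sigma>/\<gamma> + 2 * x1))"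
proof -
  define s where "s = \<sigma> / \<gamma>"
  define T where "T = 2 * x1"
  have s0: "s \<ge> 0" unfolding s_def using assms(2,5) by simp
  have T0: "T \<ge> 0" unfolding T_def using assms(4) by simp
  have L: "ln (real q) > 0" using assms(1) by simp
  have hT: "y + s + 2 * T < 1" unfolding s_def T_def using assms(6) by simp
  have c1: "s \<le> y / (real q - 1)" unfolding s_def by (rule C1)
  have c3: "s * (1 - y) < y^2" unfolding s_def by (rule C3)
  have c2: "T * (y+s+T)^2 < (1-y-s-2*T)^2 * (y+s)"
  proof -
    have "1 - y - s - 2 * T = 1 - y - \<sigma>/\<gamma> - 4 * x1" unfolding s_def T_def by simp
    then show ?thesis using C2 unfolding s_def T_def by simp
  qed
  have Smax: "Sfun q \<gamma> \<sigma> y 0 T = FF s y 0 T / ln (real q)"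
    by (rule Sfun_eq) (use assms(1-3) s_def s0 T0 hT c1 in auto)
  have mem: "Sfun q \<gamma> \<sigma> y 0 T \<in> Svals q \<gamma> \<sigma> y x1"
    unfolding Svals_def T_def using assms(4,2,5) by force
  have ub: "\<forall>v \<in> Svals q \<gamma> \<sigma> y x1. v \<le> Sfun q \<gamma> \<sigma> y 0 T"
  proof
    fix v assume "v \<in> Svals q \<gamma> \<sigma> y x1"
    then obtain x t where v: "v = Sfun q \<gamma> \<sigma> y x t" and xt: "0 \<le> t" "t \<le> T" "0 \<le> x" "x \<le> s"
      unfolding Svals_def s_def T_def by auto
    have ht: "y + s + 2 * t < 1" using hT xt by linarith
    have "v = FF s y x t / ln (real q)" unfolding v
      by (rule Sfun_eq) (use assms(1-3) s_def xt ht c1 in auto)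
    also have "\<dots> \<le> FF s y 0 t / ln (real q)"
      by (rule divide_right_mono[OF mono_x]) (use assms(3) s0 c3 xt ht L in auto)
    also have "\<dots> \<le> FF s y 0 T / ln (real q)"
      by (rule divide_right_mono[OF mono_t]) (use assms(3) s0 T0 hT c2 xt L in auto)
    finally show "v \<le> Sfun q \<gamma> \<sigma> y 0 T" using Smax by simp
  qed
  have sup: "Ifun q \<gamma> y x1 \<sigma> = Sfun q \<gamma> \<sigma> y 0 T"
    unfolding Ifun_def by (rule cSup_eq_maximum[OF mem]) (use ub in auto)
  have r: "(y + 0 + T) / (y + \<sigma>/\<gamma> + T) \<ge> 1 - 1 / real q"
    using ratio_ok[of q y s 0 T] assms(1,3) s0 T0 c1 unfolding s_def by simp
  have last: "Sfun q \<gamma> \<sigma> y 0 T =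
        Hq q T + (1 - T) * Hq q ((y + T) / (1 - T))
        + (y + \<sigma>/\<gamma> + T) * Hq q ((y + T) / (y + \<sigma>/\<gamma> + T))"
    using r unfolding Sfun_def Zq_def by simp
  show ?thesis using mem ub sup last unfolding T_def by simp
qed

end
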